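(* Let $n \geq 1$ be an integer and consider Nim on the hypercube $Q_n$ in which every edge has weight $1$, with the playing piece $\Delta$ starting at a vertex. Then the first player $P_1$ has a winning strategy if and only if $n$ is odd.
   Context: Nim on a graph: two players agree on a finite simple undirected graph $G$ whose edges carry positive integer weights, and a starting vertex on which a playing piece $\Delta$ is placed. Players $P_1$ (who moves first) and $P_2$ alternate. On a turn, the player chooses an edge of positive weight incident with the vertex currently holding $\Delta$, lowers that edge's weight by a positive integer amount, and moves $\Delta$ to the other endpoint of that edge. Edges of weight $0$ are no longer playable. A player who cannot move loses. The hypercube $Q_n$ has as vertices the binary $n$-tuples, two being adjacent iff they differ in exactly one coordinate. *)

theory Defs
  imports Main
begin

text \<open>The graph is given by a (symmetric, irreflexive) adjacency
relation E; the edge weights by a function w, where w x y is the weight of the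
edge {x,y} (kept symmetric by moves).\<close>

type_synonym 'a nim_pos = "('a \<Rightarrow> 'a \<Rightarrow> nat) \<times> 'a"

definition nim_move :: "('a \<Rightarrow> 'a \<Rightarrow> bool) \<Rightarrow> 'a nim_pos \<Rightarrow> 'a nim_pos \<Rightarrow> bool" where
  "nim_move E p q \<longleftrightarrow>
     (let w = fst p; v = snd p; u = snd q in
        E v u \<and> 0 < w v u \<and>
        (\<exists>k. k < w v u \<and> fst q = w(v := (w v)(u := k), u := (w u)(v := k))))"

text \<open>N-positions (the player to move has a winning strategy) and
P-positions (the player to move loses), defined mutually inductively.
A player who cannot move loses.\<close>

inductive nim_win :: "('a \<Rightarrow> 'a \<Rightarrow> bool) \<Rightarrow> 'a nim_pos \<Rightarrow> bool"
  and nim_lose :: "('a \<Rightarrow> 'a \<Rightarrow> bool) \<Rightarrow> 'a nim_pos \<Rightarrow> bool"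
  for E where
  win: "nim_move E p q \<Longrightarrow> nim_lose E q \<Longrightarrow> nim_win E p"
| lose: "(\<And>q. nim_move E p q \<Longrightarrow> nim_win E q) \<Longrightarrow> nim_lose E p"

definition hypercube_vertices :: "nat \<Rightarrow> bool list set" where
  "hypercube_vertices n = {xs. length xs = n}"

definition hypercube_adj :: "nat \<Rightarrow> bool list \<Rightarrow> bool list \<Rightarrow> bool" where
  "hypercube_adj n xs ys \<longleftrightarrow> length xs = n \<and> length ys = n \<and>
     card {i. i < n \<and> xs ! i \<noteq> ys ! i} = 1"

definition unit_weights :: "nat \<Rightarrow> bool list \<Rightarrow> bool list \<Rightarrow> nat" where
  "unit_weights n xs ys = (if hypercube_adj n xs ys then 1 else 0)"

end

theory Submission
  imports Defs
begin


definition upd :: "('a\<Rightarrow>'a\<Rightarrow>nat) \<Rightarrow> 'a \<Rightarrow> 'a \<Rightarrow> ('a\<Rightarrow>'a\<Rightarrow>nat)" where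
 "upd w v u = w(v := (w v)(u := 0), u := (w u)(v := 0))"

lemma upd_apply: "v \<noteq> u \<Longrightarrow> upd w v u a b = (if (a = v \<and> b = u) \<or> (a = u \<and> b = v) then 0 else w a b)"
  by (auto simp: upd_def)

lemma move_unit:
  assumes "nim_move E (w,x) q" "\<forall>a b. w a b \<le> 1"
  shows "E x (snd q) \<and> w x (snd q) = 1 \<and> fst q = upd w x (snd q)"
proof -
  from assms(1) obtain k where "E x (snd q)" "0 < w x (snd q)" "k < w x (snd q)"
    "fst q = w(x := (w x)(snd q := k), snd q := (w (snd q))(x := k))"
    unfolding nim_move_def Let_def by auto
  moreover have "w x (snd q) \<le> 1" using assms(2) by blast
  ultimately have "k = 0" by linarith
  with \<open>fst q = _\<close> \<open>E x (snd q)\<close> \<open>0 < w x (snd q)\<close> \<open>w x (snd q) \<le> 1\<close> show ?thesis unfolding upd_def by auto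
qed

lemma move_intro: "E x u \<Longrightarrow> w x u = 1 \<Longrightarrow> nim_move E (w,x) (upd w x u, u)"
  unfolding nim_move_def upd_def Let_def by auto

lemma win_not_lose: "(nim_win E p \<longrightarrow> \<not> nim_lose E p) \<and> (nim_lose E p' \<longrightarrow> \<not> nim_win E p')"
proof -
  have "(nim_win E p \<longrightarrow> \<not> nim_lose E p) \<and> (nim_lose E p' \<longrightarrow> \<not> nim_win E p')"
  proof (induction rule: nim_win_nim_lose.induct)
    case (win p q)
    then show ?case by (meson nim_lose.cases)
  next
    case (lose p)
    then show ?case by (meson nim_win.cases)
  qed
  then show ?thesis by blast
qed

definition INV where "INV E D w x \<longleftrightarrow> (\<forall>a b. w a b \<le> 1 \<and> w a b = w b a) \<and> x \<in> D \<and>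
   (\<forall>a\<in>D. \<forall>b\<in>D. \<not>(E a b \<and> 0 < w a b)) \<and> (\<forall>u. u \<notin> D \<longrightarrow> even (card {y\<in>D. E u y \<and> 0 < w u y}))"

lemma lose_inv:
  fixes E :: "'a \<Rightarrow> 'a \<Rightarrow> bool"
  assumes irr: "\<And>a. \<not> E a a" and symE: "\<And>a b. E a b \<Longrightarrow> E b a" and finE: "finite {(a,b). E a b}"
  shows "card {(a,b). E a b \<and> 0 < w a b} = N \<Longrightarrow> INV E D w x \<Longrightarrow> nim_lose E (w,x)"
proof (induction N arbitrary: w x rule: less_induct)
  case (less N w x)
  note inv = less.prems(2)[unfolded INV_def]
  have bnd: "\<forall>a b. w a b \<le> 1" using inv by blast
  show ?case
  proof (rule nim_win_nim_lose.lose)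
    fix q assume mq: "nim_move E (w,x) q"
    obtain w1 u where q: "q = (w1,u)" by (cases q)
    from move_unit[OF mq bnd] q have Exu: "E x u" and wxu: "w x u = 1" and w1: "w1 = upd w x u" by auto
    have xu: "x \<noteq> u" using irr Exu by auto
    have xD: "x \<in> D" using inv by blast
    have uD: "u \<notin> D" using inv xD Exu wxu by force
    define S where "S = {y\<in>D. E u y \<and> 0 < w u y}"
    have finS: "finite S"
    proof (rule finite_subset)
      show "S \<subseteq> snd ` {(a,b). E a b}" unfolding S_def by force
    qed (use finE in auto)
    have evS: "even (card S)" using inv uD S_def by blast
    have wux: "w u x = 1" using inv wxu by metis
    have xS: "x \<in> S" using S_def xD symE[OF Exu] wux by auto
    have S1: "{y\<in>D. E u y \<and> 0 < w1 u y} = S - {x}" using w1 upd_apply[OF xu] by (auto simp: S_def)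
    have cS: "card S > 0" using finS xS card_gt_0_iff by blast
    have "card (S - {x}) = card S - 1" using finS xS by simp
    then have "odd (card (S - {x}))" using evS cS by presburger
    then have "S - {x} \<noteq> {}" by (metis card.empty even_zero)
    then obtain y where yS: "y \<in> S" "y \<noteq> x" by blast
    have yD: "y \<in> D" and Euy: "E u y" and wuy0: "0 < w u y"
      using yS unfolding S_def by auto
    have "w u y \<le> 1" using bnd by blast
    with wuy0 have wuy: "w u y = 1" by linarith
    have yu: "y \<noteq> u" using yD uD by auto
    have w1uy: "w1 u y = 1" using w1 upd_apply[OF xu] wuy yS(2) by auto
    define w2 where "w2 = upd w1 u y"
    have mv2: "nim_move E (w1,u) (w2,y)" unfolding w2_def using move_intro[of E u y w1] Euy w1uy by blast
    have uy: "u \<noteq> y" using yu by auto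
    have w2e: "\<And>a b. w2 a b = (if (a = x \<and> b = u) \<or> (a = u \<and> b = x) \<or> (a = u \<and> b = y) \<or> (a = y \<and> b = u) then 0 else w a b)"
      unfolding w2_def using upd_apply[OF uy] upd_apply[OF xu] w1 by auto
    have inv2: "INV E D w2 y"
      unfolding INV_def
    proof (intro conjI allI impI ballI)
      fix a b show "w2 a b \<le> 1" using w2e bnd by simp
      show "w2 a b = w2 b a" using w2e inv by metis
    next
      show "y \<in> D" by fact
    next
      fix a b assume "a \<in> D" "b \<in> D"
      then show "\<not> (E a b \<and> 0 < w2 a b)" using inv w2e by (metis neq0_conv)
    next
      fix u' assume u'D: "u' \<notin> D"
      show "even (card {y' \<in> D. E u' y' \<and> 0 < w2 u' y'})"
      proof (cases "u' = u")
        case True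
        have "{y' \<in> D. E u' y' \<and> 0 < w2 u' y'} = S - {x,y}"
          using True w2e xu yu uD by (auto simp: S_def)
        moreover have "card (S - {x,y}) = card S - 2"
          using finS xS yS by (simp add: card_Diff_subset)
        moreover have "card S \<ge> 2"
        proof -
          have "{x,y} \<subseteq> S" using xS yS by auto
          then have "card {x,y} \<le> card S" using finS card_mono by blast
          then show ?thesis using yS(2) by auto
        qed
        ultimately show ?thesis using evS by auto
      next
        case False
        have "{y' \<in> D. E u' y' \<and> 0 < w2 u' y'} = {y' \<in> D. E u' y' \<and> 0 < w u' y'}"
          using False w2e xD yD u'D by auto
        moreover have "even (card {y' \<in> D. E u' y' \<and> 0 < w u' y'})" using inv u'D by blast
        ultimately show ?thesis by (simp only:)
      qed
    qed
    have sub: "{(a,b). E a b \<and> 0 < w2 a b} \<subset> {(a,b). E a b \<and> 0 < w a b}"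
    proof
      show "{(a,b). E a b \<and> 0 < w2 a b} \<subseteq> {(a,b). E a b \<and> 0 < w a b}"
        using w2e by auto
      have "(x,u) \<in> {(a,b). E a b \<and> 0 < w a b}" using Exu wxu by auto
      moreover have "(x,u) \<notin> {(a,b). E a b \<and> 0 < w2 a b}" using w2e by auto
      ultimately show "{(a,b). E a b \<and> 0 < w2 a b} \<noteq> {(a,b). E a b \<and> 0 < w a b}" by blast
    qed
    have "finite {(a,b). E a b \<and> 0 < w a b}"
      by (rule finite_subset[OF _ finE]) auto
    then have "card {(a,b). E a b \<and> 0 < w2 a b} < N"
      using psubset_card_mono[OF _ sub] less.prems(1) by simp
    then have "nim_lose E (w2,y)" using less.IH inv2 by blast
    then show "nim_win E q" using q mv2 nim_win_nim_lose.win by blast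
  qed
qed



lemma even_inv:
  "finite S \<Longrightarrow> (\<And>y. y\<in>S \<Longrightarrow> f y \<in> S \<and> f (f y) = y \<and> f y \<noteq> y) \<Longrightarrow> even (card S)"
proof (induction "card S" arbitrary: S rule: less_induct)
  case less
  show ?case
  proof (cases "S = {}")
    case True then show ?thesis by simp
  next
    case False
    then obtain y where y: "y \<in> S" by blast
    define S' where "S' = S - {y, f y}"
    have fy: "f y \<in> S" "f y \<noteq> y" "f (f y) = y" using less.prems(2)[OF y] by auto
    have sub: "{y, f y} \<subseteq> S" using y fy by auto
    have c: "card S' = card S - 2" unfolding S'_def using less.prems(1) sub fy(2)
      by (simp add: card_Diff_subset)
    have c2: "card S \<ge> 2" using card_mono[OF less.prems(1) sub] fy(2) by auto
    have "even (card S')"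
    proof (rule less.hyps)
      show "card S' < card S" using c c2 by simp
      show "finite S'" using less.prems(1) S'_def by simp
      fix z assume z: "z \<in> S'"
      then have zS: "z \<in> S" "z \<noteq> y" "z \<noteq> f y" unfolding S'_def by auto
      have fz: "f z \<in> S" "f (f z) = z" "f z \<noteq> z" using less.prems(2)[OF zS(1)] by auto
      have "f z \<noteq> y" using fz(2) zS(3) by auto
      moreover have "f z \<noteq> f y" using fz(2) fy(3) zS(2) by metis
      ultimately show "f z \<in> S' \<and> f (f z) = z \<and> f z \<noteq> z" using fz unfolding S'_def by auto
    qed
    then show ?thesis using c c2 by presburger
  qed
qed

definition fl :: "bool list \<Rightarrow> nat \<Rightarrow> bool list" where "fl a i = a[i := \<not> a!i]"

lemma adj_sym: "hypercube_adj n a b \<Longrightarrow> hypercube_adj n b a"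
proof -
  have "{i. i < n \<and> a!i \<noteq> b!i} = {i. i < n \<and> b!i \<noteq> a!i}" by auto
  then show "hypercube_adj n a b \<Longrightarrow> hypercube_adj n b a" unfolding hypercube_adj_def by simp
qed

lemma adj_irr: "\<not> hypercube_adj n a a"
  unfolding hypercube_adj_def by simp

lemma adj_len: "hypercube_adj n a b \<Longrightarrow> length a = n \<and> length b = n"
  unfolding hypercube_adj_def by simp

lemma fin_len: "finite {xs :: bool list. length xs = n}"
proof -
  have "{xs :: bool list. length xs = n} = {xs. set xs \<subseteq> UNIV \<and> length xs = n}" by simp
  then show ?thesis using finite_lists_length_eq[of "UNIV :: bool set" n] by simp
qed

lemma adj_fin: "finite {(a,b). hypercube_adj n a b}"
proof (rule finite_subset)
  show "{(a,b). hypercube_adj n a b} \<subseteq> {xs :: bool list. length xs = n} \<times> {xs :: bool list. length xs = n}"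
    using adj_len by auto
  show "finite ({xs :: bool list. length xs = n} \<times> {xs :: bool list. length xs = n})" using finite_cartesian_product[OF fin_len[of n] fin_len[of n]] .
qed

lemma adj_fl: "length u = n \<Longrightarrow> i < n \<Longrightarrow> hypercube_adj n u (fl u i)"
proof -
  assume a: "length u = n" "i < n"
  have "{k. k < n \<and> u!k \<noteq> fl u i ! k} = {i}"
  proof (intro set_eqI iffI)
    fix k assume "k \<in> {k. k < n \<and> u!k \<noteq> fl u i ! k}"
    then show "k \<in> {i}" unfolding fl_def using a by (cases "k = i") auto
  next
    fix k assume "k \<in> {i}"
    then show "k \<in> {k. k < n \<and> u!k \<noteq> fl u i ! k}" unfolding fl_def using a by simp
  qed
  then show ?thesis unfolding hypercube_adj_def fl_def using a by simp
qed

lemma adj_is_fl: "hypercube_adj n u y \<Longrightarrow> \<exists>i<n. y = fl u i"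
proof -
  assume h: "hypercube_adj n u y"
  have l: "length u = n" "length y = n" using h unfolding hypercube_adj_def by auto
  have c: "card {k. k < n \<and> u!k \<noteq> y!k} = 1" using h unfolding hypercube_adj_def by auto
  obtain i where i: "{k. k < n \<and> u!k \<noteq> y!k} = {i}" using c card_1_singleton_iff[of "{k. k < n \<and> u!k \<noteq> y!k}"] by auto
  have iin: "i \<in> {k. k < n \<and> u!k \<noteq> y!k}" using i by (simp only: singleton_iff)
  then have ilt: "i < n" and ui: "u!i \<noteq> y!i" by auto
  have oth: "u!k = y!k" if "k < n" "k \<noteq> i" for k
  proof (rule ccontr)
    assume "u!k \<noteq> y!k"
    then have "k \<in> {k. k < n \<and> u!k \<noteq> y!k}" using that by simp
    then show False using i that(2) by (simp only: singleton_iff)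
  qed
  have "y = fl u i" unfolding fl_def
  proof (intro nth_equalityI)
    show "length y = length (u[i := \<not> u ! i])" using l by simp
    fix k assume "k < length y"
    then show "y ! k = u[i := \<not> u ! i] ! k" using l ilt ui oth[of k]
      by (cases "k = i") auto
  qed
  then show ?thesis using ilt by blast
qed

lemma nbrs: "length u = n \<Longrightarrow> {y. hypercube_adj n u y} = fl u ` {..<n}"
  using adj_fl adj_is_fl by fastforce

lemma card_nbrs: "length u = n \<Longrightarrow> card {y. hypercube_adj n u y} = n"
proof -
  assume l: "length u = n"
  have "inj_on (fl u) {..<n}"
  proof
    fix i j assume "i \<in> {..<n}" "j \<in> {..<n}" "fl u i = fl u j"
    then show "i = j" unfolding fl_def using l
      by (metis lessThan_iff nth_list_update_eq nth_list_update_neq)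
  qed
  then show ?thesis using nbrs[OF l] by (simp add: card_image)
qed

definition sc :: "bool list \<Rightarrow> nat" where "sc a = card {k. k < length a \<and> a!k}"

lemma sc_fl: "i < length a \<Longrightarrow> even (sc (fl a i)) \<longleftrightarrow> odd (sc a)"
proof -
  assume i: "i < length a"
  let ?A = "{k. k < length a \<and> a!k}"
  have fin: "finite ?A" by simp
  show ?thesis
  proof (cases "a!i")
    case True
    have "{k. k < length (fl a i) \<and> fl a i ! k} = ?A - {i}"
      using i True unfolding fl_def by (auto simp: nth_list_update)
    moreover have "i \<in> ?A" using i True by simp
    ultimately have "sc (fl a i) = sc a - 1" "sc a > 0" unfolding sc_def using fin
      by (auto simp: card_gt_0_iff)
    then show ?thesis by presburger
  next
    case False
    have "{k. k < length (fl a i) \<and> fl a i ! k} = insert i ?A"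
      using i False unfolding fl_def by (auto simp: nth_list_update)
    moreover have "i \<notin> ?A" using i False by simp
    ultimately have "sc (fl a i) = sc a + 1" unfolding sc_def using fin by simp
    then show ?thesis by presburger
  qed
qed

lemma adj_par: "hypercube_adj n a b \<Longrightarrow> even (sc a) \<longleftrightarrow> odd (sc b)"
  using adj_is_fl adj_len sc_fl by metis

lemma common_even:
  assumes uv: "u \<noteq> v"
  shows "even (card {y. hypercube_adj n v y \<and> hypercube_adj n u y})"
proof (cases "length u = n \<and> length v = n")
  case False
  then have "{y. hypercube_adj n v y \<and> hypercube_adj n u y} = {}" using adj_len by blast
  then show ?thesis by (simp only: card.empty even_zero)
next
  case True
  let ?S = "{y. hypercube_adj n v y \<and> hypercube_adj n u y}"
  define f where "f y = map (\<lambda>(a,b,c). a \<noteq> (b \<noteq> c)) (zip u (zip v y))" for y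
  have fn: "length y = n \<Longrightarrow> length (f y) = n \<and> (\<forall>k<n. f y ! k = (u!k \<noteq> (v!k \<noteq> y!k)))" for y
    unfolding f_def using True by simp
  show ?thesis
  proof (rule even_inv[of ?S f])
    show "finite ?S" by (rule finite_subset[OF _ fin_len[of n]]) (auto dest: adj_len)
    fix y assume y: "y \<in> ?S"
    then have ly: "length y = n" using adj_len by blast
    have cv: "card {k. k < n \<and> v!k \<noteq> y!k} = 1" and cu: "card {k. k < n \<and> u!k \<noteq> y!k} = 1"
      using y unfolding hypercube_adj_def by auto
    have lf: "length (f y) = n" using fn[OF ly] by simp
    have e1: "{k. k < n \<and> v!k \<noteq> f y!k} = {k. k < n \<and> u!k \<noteq> y!k}" using fn[OF ly] by auto
    have e2: "{k. k < n \<and> u!k \<noteq> f y!k} = {k. k < n \<and> v!k \<noteq> y!k}" using fn[OF ly] by auto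
    have "f y \<in> ?S" unfolding hypercube_adj_def using True lf e1 e2 cv cu by simp
    moreover have "f (f y) = y"
      using fn[OF lf] fn[OF ly] ly lf by (intro nth_equalityI) auto
    moreover have "f y \<noteq> y"
    proof
      assume "f y = y"
      then have "\<forall>k<n. u!k = v!k" using fn[OF ly] by (metis (full_types))
      then have "u = v" using True by (intro nth_equalityI) auto
      then show False using uv by simp
    qed
    ultimately show "f y \<in> ?S \<and> f (f y) = y \<and> f y \<noteq> y" by blast
  qed
qed




lemma uw_pos: "0 < unit_weights n a b \<longleftrightarrow> hypercube_adj n a b"
  unfolding unit_weights_def by simp

lemma uw_bnd: "unit_weights n a b \<le> 1 \<and> unit_weights n a b = unit_weights n b a"
  unfolding unit_weights_def using adj_sym by auto

lemma lose_hyp: "INV (hypercube_adj n) D w x \<Longrightarrow> nim_lose (hypercube_adj n) (w,x)"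
  using lose_inv[of "hypercube_adj n", OF adj_irr adj_sym adj_fin] by blast

theorem mainTheorem4:
  fixes n :: nat and v :: "bool list"
  assumes "n \<ge> 1" and "v \<in> hypercube_vertices n"
  shows "nim_win (hypercube_adj n) (unit_weights n, v) \<longleftrightarrow> odd n"
proof -
  have lv: "length v = n" using assms(2) unfolding hypercube_vertices_def by simp
  show ?thesis
  proof (cases "odd n")
    case False
    define D where "D = {a. length a = n \<and> (even (sc a) \<longleftrightarrow> even (sc v))}"
    have "INV (hypercube_adj n) D (unit_weights n) v"
      unfolding INV_def
    proof (intro conjI allI impI ballI)
      fix a b show "unit_weights n a b \<le> 1" "unit_weights n a b = unit_weights n b a" using uw_bnd by auto
    next
      show "v \<in> D" using lv D_def by simp
    next
      fix a b assume "a \<in> D" "b \<in> D"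
      then show "\<not> (hypercube_adj n a b \<and> 0 < unit_weights n a b)"
        using adj_par[of n a b] unfolding D_def by auto
    next
      fix u assume uD: "u \<notin> D"
      show "even (card {y \<in> D. hypercube_adj n u y \<and> 0 < unit_weights n u y})"
      proof (cases "length u = n")
        case True
        have "{y \<in> D. hypercube_adj n u y \<and> 0 < unit_weights n u y} = {y. hypercube_adj n u y}"
          using uD True adj_par[of n u] adj_len[of n u] unfolding D_def uw_pos by auto
        then show ?thesis using card_nbrs[OF True] False by simp
      next
        case f2: False
        have "{y \<in> D. hypercube_adj n u y \<and> 0 < unit_weights n u y} = {}"
          using f2 adj_len[of n u] by auto
        then show ?thesis by (simp only: card.empty even_zero)
      qed
    qed
    then have "nim_lose (hypercube_adj n) (unit_weights n, v)" by (rule lose_hyp)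
    then show ?thesis using win_not_lose False by blast
  next
    case True
    define w0 where "w0 = fl v 0"
    have adj0: "hypercube_adj n v w0" unfolding w0_def using adj_fl[OF lv] assms(1) by simp
    have vw: "v \<noteq> w0" using adj0 adj_irr by metis
    have uw1: "unit_weights n v w0 = 1" using adj0 unfolding unit_weights_def by simp
    define w1 where "w1 = upd (unit_weights n) v w0"
    have mv: "nim_move (hypercube_adj n) (unit_weights n, v) (w1, w0)"
      unfolding w1_def using move_intro[of "hypercube_adj n" v w0 "unit_weights n"] adj0 uw1 by blast
    define D where "D = {y. hypercube_adj n v y}"
    have w0D: "w0 \<in> D" using adj0 D_def by simp
    have w1e: "\<And>a b. w1 a b = (if (a = v \<and> b = w0) \<or> (a = w0 \<and> b = v) then 0 else unit_weights n a b)"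
      unfolding w1_def using upd_apply[OF vw] by simp
    have "INV (hypercube_adj n) D w1 w0"
      unfolding INV_def
    proof (intro conjI allI impI ballI)
      fix a b show "w1 a b \<le> 1" "w1 a b = w1 b a" using uw_bnd w1e by auto
    next
      show "w0 \<in> D" using adj0 D_def by simp
    next
      fix a b assume "a \<in> D" "b \<in> D"
      then show "\<not> (hypercube_adj n a b \<and> 0 < w1 a b)"
        using adj_par[of n a b] adj_par[of n v a] adj_par[of n v b] unfolding D_def by auto
    next
      fix u assume uD: "u \<notin> D"
      show "even (card {y \<in> D. hypercube_adj n u y \<and> 0 < w1 u y})"
      proof (cases "u = v")
        case True
        have "{y \<in> D. hypercube_adj n u y \<and> 0 < w1 u y} = D - {w0}"
          using True w1e unfolding D_def by (auto simp: uw_pos)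
        moreover have "card D = n" using card_nbrs[OF lv] D_def by simp
        moreover have "finite D" unfolding D_def using nbrs[OF lv] by simp
        ultimately have "card {y \<in> D. hypercube_adj n u y \<and> 0 < w1 u y} = n - 1"
          using w0D by simp
        then show ?thesis using \<open>odd n\<close> assms(1) by presburger
      next
        case False
        have "u \<noteq> w0" using uD w0D by auto
        then have "{y \<in> D. hypercube_adj n u y \<and> 0 < w1 u y} = {y. hypercube_adj n v y \<and> hypercube_adj n u y}"
          using False w1e unfolding D_def by (auto simp: uw_pos)
        then show ?thesis using common_even[OF False] by simp
      qed
    qed
    then have "nim_lose (hypercube_adj n) (w1, w0)" by (rule lose_hyp)
    then show ?thesis using mv True nim_win_nim_lose.win by blast
  qed
qed


end
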